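(* Let $M$ be a left-quotient of $\widetilde{\mathrm{SL}}_2$ with fundamental group $\pi$ presented as below, and let $\rho,\rho'\in\mathcal R(\pi,\widetilde{\mathrm{SL}}_2)$ satisfy $\mathrm{pr}\circ\rho=\mathrm{pr}\circ\rho'$. Then $\rho(h)=\rho'(h)$ and $\rho(q_j)=\rho'(q_j)$ for $j=1,\dots,n$.
   Context: $\mathrm{pr}\colon\widetilde{\mathrm{SL}}_2\to\mathrm{PSL}_2\mathbb R$ is the universal covering. $M$ has normalised Seifert invariants $\{g,b,(\alpha_1,\beta_1),\dots,(\alpha_n,\beta_n)\}$ with Euler number $e=-(b+\sum_j\beta_j/\alpha_j)\neq0$, and $\pi=\langle u_1,v_1,\dots,u_g,v_g,q_1,\dots,q_n,h\mid\prod_i[u_i,v_i]\prod_jq_j=h^b,\ q_j^{\alpha_j}h^{\beta_j}=1,\ h\text{ central}\rangle$. $\mathcal R(\pi,\widetilde{\mathrm{SL}}_2)$ is the set of faithful homomorphisms $\pi\to\widetilde{\mathrm{SL}}_2$ with discrete cocompact image. *)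

theory Defs
  imports "HOL-Analysis.Analysis" "HOL-Algebra.Group"
begin

text \<open>Model: an element of the universal cover is a continuous lift f = id + phi
  to the real line (angles) of the action of a matrix A in SL(2,R) on the circle
  of directions S^1 = R / 2 pi Z, i.e. A (cos t, sin t) is a positive multiple of
  (cos (f t), sin (f t)).  The displacement phi = f - id is 2 pi periodic, hence a
  bounded continuous function, and we store phi.  The group law is composition
  of lifts; the topology is the uniform (sup) metric of bcontfun, which is the Lie
  group topology.\<close>

definition lifts_mat :: "real^2^2 \<Rightarrow> (real \<Rightarrow>\<^sub>C real) \<Rightarrow> bool" where
  "lifts_mat A phi \<longleftrightarrow> det A = 1 \<and>
     (\<forall>t. \<exists>r>0. A *v vector [cos t, sin t] =
               r *\<^sub>R vector [cos (t + apply_bcontfun phi t), sin (t + apply_bcontfun phi t)])"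

definition SL2t_carrier :: "(real \<Rightarrow>\<^sub>C real) set" where
  "SL2t_carrier = {phi. \<exists>A. lifts_mat A phi}"

definition SL2t_mult :: "(real \<Rightarrow>\<^sub>C real) \<Rightarrow> (real \<Rightarrow>\<^sub>C real) \<Rightarrow> (real \<Rightarrow>\<^sub>C real)" where
  "SL2t_mult phi psi =
     Bcontfun (\<lambda>t. apply_bcontfun psi t + apply_bcontfun phi (t + apply_bcontfun psi t))"

definition SL2t :: "(real \<Rightarrow>\<^sub>C real) monoid" where
  "SL2t = \<lparr>carrier = SL2t_carrier, mult = SL2t_mult, one = 0\<rparr>"

text \<open>PSL(2,R) = SL(2,R)/{+-1}; an element is represented as the pair {A, -A}.\<close>
definition pr :: "(real \<Rightarrow>\<^sub>C real) \<Rightarrow> (real^2^2) set" where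
  "pr phi = {A. \<exists>B. lifts_mat B phi \<and> (A = B \<or> A = - B)}"

definition cocompact_SL2t :: "(real \<Rightarrow>\<^sub>C real) set \<Rightarrow> bool" where
  "cocompact_SL2t \<Gamma> \<longleftrightarrow> (\<exists>K. compact K \<and> K \<subseteq> carrier SL2t \<and>
       carrier SL2t \<subseteq> (\<Union>\<gamma>\<in>\<Gamma>. (\<lambda>k. \<gamma> \<otimes>\<^bsub>SL2t\<^esub> k) ` K))"

definition Rep_dc :: "('g, 'm) monoid_scheme \<Rightarrow> ('g \<Rightarrow> (real \<Rightarrow>\<^sub>C real)) set" where
  "Rep_dc G = {\<rho>. \<rho> \<in> hom G SL2t \<and> inj_on \<rho> (carrier G) \<and>
       discrete (\<rho> ` carrier G) \<and> cocompact_SL2t (\<rho> ` carrier G)}"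

datatype sgen = U nat | V nat | Q nat | H

type_synonym sword = "(sgen \<times> bool) list"  \<comment> \<open>True = generator, False = its inverse\<close>

definition seif_gens :: "nat \<Rightarrow> nat \<Rightarrow> sgen set" where
  "seif_gens g n = {U i |i. 1 \<le> i \<and> i \<le> g} \<union> {V i |i. 1 \<le> i \<and> i \<le> g}
                    \<union> {Q j |j. 1 \<le> j \<and> j \<le> n} \<union> {H}"

definition hpow :: "int \<Rightarrow> sword" where
  "hpow k = (if k \<ge> 0 then replicate (nat k) (H, True) else replicate (nat (- k)) (H, False))"

definition comm_word :: "sgen \<Rightarrow> sgen \<Rightarrow> sword" where
  "comm_word a c = [(a, True), (c, True), (a, False), (c, False)]"

text \<open>Relators of
  pi = < u_i, v_i, q_j, h | prod_i [u_i,v_i] prod_j q_j = h^b, q_j^alpha_j h^beta_j = 1, h central >.\<close>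
definition seif_relators :: "nat \<Rightarrow> int \<Rightarrow> nat \<Rightarrow> (nat \<Rightarrow> int) \<Rightarrow> (nat \<Rightarrow> int) \<Rightarrow> sword set" where
  "seif_relators g b n \<alpha> \<beta> =
     {concat (map (\<lambda>i. comm_word (U i) (V i)) [1..<g+1]) @ map (\<lambda>j. (Q j, True)) [1..<n+1] @ hpow (- b)}
     \<union> {replicate (nat (\<alpha> j)) (Q j, True) @ hpow (\<beta> j) |j. 1 \<le> j \<and> j \<le> n}
     \<union> {comm_word H a |a. a \<in> seif_gens g n}"

text \<open>The congruence on words generated by free cancellation and the relators
  (i.e. equality in the free group modulo the normal closure of the relators).\<close>
inductive word_eqv :: "'a set \<Rightarrow> ('a \<times> bool) list set \<Rightarrow> ('a \<times> bool) list \<Rightarrow> ('a \<times> bool) list \<Rightarrow> bool"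
  for S :: "'a set" and R :: "('a \<times> bool) list set" where
  refl: "word_eqv S R w w"
| sym: "word_eqv S R w w' \<Longrightarrow> word_eqv S R w' w"
| trans: "word_eqv S R w w' \<Longrightarrow> word_eqv S R w' w'' \<Longrightarrow> word_eqv S R w w''"
| cancel: "a \<in> S \<Longrightarrow> word_eqv S R (u @ [(a, s), (a, \<not> s)] @ v) (u @ v)"
| rel: "r \<in> R \<Longrightarrow> word_eqv S R (u @ r @ v) (u @ v)"

definition eval_word :: "('g, 'm) monoid_scheme \<Rightarrow> ('a \<Rightarrow> 'g) \<Rightarrow> ('a \<times> bool) list \<Rightarrow> 'g" where
  "eval_word G x w = foldr (\<lambda>(a, s) acc. (if s then x a else inv\<^bsub>G\<^esub> (x a)) \<otimes>\<^bsub>G\<^esub> acc) w \<one>\<^bsub>G\<^esub>"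

definition presented_by :: "('g, 'm) monoid_scheme \<Rightarrow> 'a set \<Rightarrow> ('a \<times> bool) list set \<Rightarrow> ('a \<Rightarrow> 'g) \<Rightarrow> bool" where
  "presented_by G S R x \<longleftrightarrow> group G \<and> x ` S \<subseteq> carrier G \<and>
     eval_word G x ` lists (S \<times> UNIV) = carrier G \<and>
     (\<forall>w\<in>lists (S \<times> UNIV). \<forall>w'\<in>lists (S \<times> UNIV).
        eval_word G x w = eval_word G x w' \<longleftrightarrow> word_eqv S R w w')"

definition normalised_seifert :: "nat \<Rightarrow> (nat \<Rightarrow> int) \<Rightarrow> (nat \<Rightarrow> int) \<Rightarrow> bool" where
  "normalised_seifert n \<alpha> \<beta> \<longleftrightarrow>
     (\<forall>j. 1 \<le> j \<and> j \<le> n \<longrightarrow> 0 < \<beta> j \<and> \<beta> j < \<alpha> j \<and> coprime (\<alpha> j) (\<beta> j))"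

definition euler_number :: "int \<Rightarrow> nat \<Rightarrow> (nat \<Rightarrow> int) \<Rightarrow> (nat \<Rightarrow> int) \<Rightarrow> real" where
  "euler_number b n \<alpha> \<beta> = - (of_int b + (\<Sum>j=1..n. of_int (\<beta> j) / of_int (\<alpha> j)))"

end

theory Submission
  imports Defs
begin


lemma vec_angle:
  fixes a b c :: real
  assumes "vector [cos a, sin a] = c *\<^sub>R (vector [cos b, sin b] :: real^2)"
  shows "\<exists>i::int. a = b + of_int i * pi"
proof -
  have 1: "cos a = c * cos b" and 2: "sin a = c * sin b"
    using arg_cong[OF assms, of "\<lambda>v. v $ 1"] arg_cong[OF assms, of "\<lambda>v. v $ 2"] by auto
  have "sin (a - b) = 0" by (simp add: sin_diff 1 2)
  then obtain i :: int where "a - b = of_int i * pi" using sin_zero_iff_int2 by blast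
  then show ?thesis by (intro exI[of _ i]) simp
qed

lemma const_pi:
  fixes d :: "real \<Rightarrow> real"
  assumes c: "continuous_on UNIV d" and h: "\<And>t. \<exists>i::int. d t = of_int i * pi"
  shows "d s = d t"
proof -
  have "d constant_on UNIV"
  proof (rule continuous_discrete_range_constant[OF connected_UNIV c])
    fix x :: real assume "x \<in> UNIV"
    show "\<exists>e>0. \<forall>y. y \<in> UNIV \<and> d y \<noteq> d x \<longrightarrow> e \<le> norm (d y - d x)"
    proof (intro exI[of _ pi] conjI allI impI)
      fix y assume "y \<in> UNIV \<and> d y \<noteq> d x"
      obtain i j :: int where ij: "d y = of_int i * pi" "d x = of_int j * pi" using h by blast
      with \<open>y \<in> UNIV \<and> d y \<noteq> d x\<close> have "i \<noteq> j" by auto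
      hence "1 \<le> \<bar>of_int i - of_int j :: real\<bar>" by (simp flip: of_int_diff)
      hence "1 * pi \<le> \<bar>of_int i - of_int j :: real\<bar> * pi" by (intro mult_right_mono) auto
      thus "pi \<le> norm (d y - d x)" by (simp add: ij abs_mult left_diff_distrib[symmetric])
    qed simp
  qed
  thus ?thesis unfolding constant_on_def by auto
qed

lemma periodic_int:
  fixes f :: "real \<Rightarrow> real"
  assumes p: "\<And>t. f (t + pi) = f t"
  shows "f (t + of_int i * pi) = f t"
proof -
  have n: "f (s + of_nat m * pi) = f s" for s m
  proof (induction m arbitrary: s)
    case (Suc m)
    have "f (s + of_nat (Suc m) * pi) = f ((s + pi) + of_nat m * pi)" by (simp add: algebra_simps)
    also have "\<dots> = f s" using Suc p by simp
    finally show ?case .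
  qed simp
  show ?thesis
  proof (cases "i \<ge> 0")
    case True then show ?thesis using n[of t "nat i"] by simp
  next
    case False
    have "f (t + of_int i * pi) = f (t + of_int i * pi + of_nat (nat (- i)) * pi)" by (rule n[symmetric])
    also have "\<dots> = f t" using False by (simp add: algebra_simps)
    finally show ?thesis .
  qed
qed

lemma lifts_periodic:
  assumes "lifts_mat A phi"
  shows "apply_bcontfun phi (t + pi) = apply_bcontfun phi t"
proof -
  let ?f = "apply_bcontfun phi"
  have L: "\<And>t. \<exists>r>0. A *v vector [cos t, sin t] = r *\<^sub>R vector [cos (t + ?f t), sin (t + ?f t)]"
    using assms unfolding lifts_mat_def by blast
  have step: "\<exists>i::int. ?f (s + pi) - ?f s = of_int i * pi" for s
  proof -
    obtain r where r: "r > 0" "A *v vector [cos s, sin s] = r *\<^sub>R vector [cos (s + ?f s), sin (s + ?f s)]" using L by blast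
    obtain r' where r': "r' > 0" "A *v vector [cos (s+pi), sin (s+pi)] = r' *\<^sub>R vector [cos (s + pi + ?f (s+pi)), sin (s + pi + ?f (s+pi))]" using L by blast
    have neg: "vector [cos (s+pi), sin (s+pi)] = - (vector [cos s, sin s] :: real^2)"
      by (simp add: vec_eq_iff forall_2)
    have "r' *\<^sub>R vector [cos (s + pi + ?f (s+pi)), sin (s + pi + ?f (s+pi))] = - (r *\<^sub>R (vector [cos (s + ?f s), sin (s + ?f s)] :: real^2))"
    proof -
      have "A *v (- vector [cos s, sin s]) = - (A *v (vector [cos s, sin s] :: real^2))"
        using matrix_vector_mult_diff_distrib[of A 0 "vector [cos s, sin s] :: real^2"] by simp
      thus ?thesis using r(2) r'(2) neg by metis
    qed
    hence "vector [cos (s + pi + ?f (s+pi)), sin (s + pi + ?f (s+pi))] = (- r / r') *\<^sub>R (vector [cos (s + ?f s), sin (s + ?f s)] :: real^2)"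
      using r'(1) by (auto simp: vec_eq_iff forall_2 field_simps)
    from vec_angle[OF this] obtain i :: int where "s + pi + ?f (s+pi) = s + ?f s + of_int i * pi" by blast
    hence "?f (s + pi) - ?f s = of_int (i - 1) * pi" by (simp add: algebra_simps)
    thus ?thesis by blast
  qed
  have cd: "continuous_on UNIV (\<lambda>s. ?f (s + pi) - ?f s)"
    by (intro continuous_intros continuous_on_compose2[OF continuous_on_apply_bcontfun]) auto
  obtain m :: int where m: "?f pi - ?f 0 = of_int m * pi" using step[of 0] by auto
  have cm: "?f (s + pi) - ?f s = of_int m * pi" for s
    using const_pi[OF cd step, of s 0] m by simp
  have nm: "?f (of_nat k * pi) = ?f 0 + of_nat k * of_int m * pi" for k
  proof (induction k)
    case (Suc k)
    have "?f (of_nat (Suc k) * pi) = ?f (of_nat k * pi + pi)" by (simp add: algebra_simps)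
    also have "\<dots> = ?f (of_nat k * pi) + of_int m * pi" using cm[of "of_nat k * pi"] by simp
    finally show ?case using Suc by (simp add: algebra_simps)
  qed simp
  have "m = 0"
  proof (rule ccontr)
    assume "m \<noteq> 0"
    hence m1: "1 \<le> \<bar>of_int m :: real\<bar>" by linarith
    obtain k :: nat where k: "real k > 2 * norm phi / pi" using reals_Archimedean2 by blast
    have b1: "\<bar>?f (of_nat k * pi)\<bar> \<le> norm phi" "\<bar>?f 0\<bar> \<le> norm phi" using norm_bounded[of phi] by auto
    have "of_nat k * pi \<le> of_nat k * \<bar>of_int m\<bar> * pi" using m1 mult_right_mono[OF mult_left_mono[OF m1, of "real k"], of pi] by simp
    also have "\<dots> = \<bar>?f (of_nat k * pi) - ?f 0\<bar>" using nm[of k] by (simp add: abs_mult)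
    also have "\<dots> \<le> 2 * norm phi" using b1 by linarith
    finally have "of_nat k * pi \<le> 2 * norm phi" .
    with k show False by (simp add: field_simps)
  qed
  thus ?thesis using cm[of t] by simp
qed



lemma mult_apply:
  "apply_bcontfun (SL2t_mult phi psi) t = apply_bcontfun psi t + apply_bcontfun phi (t + apply_bcontfun psi t)"
proof -
  have "(\<lambda>t. apply_bcontfun psi t + apply_bcontfun phi (t + apply_bcontfun psi t)) \<in> bcontfun"
  proof (rule bcontfun_normI)
    show "continuous_on UNIV (\<lambda>t. apply_bcontfun psi t + apply_bcontfun phi (t + apply_bcontfun psi t))"
      by (intro continuous_intros continuous_on_compose2[OF continuous_on_apply_bcontfun]) auto
    fix x
    show "norm (apply_bcontfun psi x + apply_bcontfun phi (x + apply_bcontfun psi x)) \<le> norm psi + norm phi"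
      using norm_bounded[of psi x] norm_bounded[of phi "x + apply_bcontfun psi x"] norm_triangle_ineq
      by (meson add_mono order_trans)
  qed
  thus ?thesis unfolding SL2t_mult_def by (simp add: Bcontfun_inverse)
qed

lemma pr_shift:
  assumes "phi \<in> carrier SL2t" and "pr phi = pr psi"
  shows "\<exists>i::int. \<forall>t. apply_bcontfun psi t = apply_bcontfun phi t + of_int i * pi"
proof -
  let ?f = "apply_bcontfun phi" and ?g = "apply_bcontfun psi"
  obtain A where A: "lifts_mat A phi" using assms(1) by (auto simp: SL2t_def SL2t_carrier_def)
  have "A \<in> pr phi" using A by (auto simp: pr_def)
  then obtain B where B: "lifts_mat B psi" "A = B \<or> A = - B" using assms(2) by (auto simp: pr_def)
  have pt: "\<exists>i::int. ?g t - ?f t = of_int i * pi" for t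
  proof -
    obtain r where r: "r > 0" "A *v vector [cos t, sin t] = r *\<^sub>R vector [cos (t + ?f t), sin (t + ?f t)]"
      using A unfolding lifts_mat_def by blast
    obtain r' where r': "r' > 0" "B *v vector [cos t, sin t] = r' *\<^sub>R vector [cos (t + ?g t), sin (t + ?g t)]"
      using B(1) unfolding lifts_mat_def by blast
    obtain c where c: "r' *\<^sub>R (vector [cos (t + ?g t), sin (t + ?g t)] :: real^2) = c *\<^sub>R r *\<^sub>R vector [cos (t + ?f t), sin (t + ?f t)]"
    proof (cases "A = B")
      case True then show ?thesis using that[of 1] r r' by simp
    next
      case False
      hence AB: "A = - B" using B(2) by blast
      have "(- B) *v v = - (B *v v)" for v :: "real^2"
        by (simp add: vec_eq_iff matrix_vector_mult_def sum_negf)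
      then have "- (r' *\<^sub>R (vector [cos (t + ?g t), sin (t + ?g t)] :: real^2)) = r *\<^sub>R vector [cos (t + ?f t), sin (t + ?f t)]"
        using r r' AB by simp
      then have "r' *\<^sub>R (vector [cos (t + ?g t), sin (t + ?g t)] :: real^2) = (-1) *\<^sub>R r *\<^sub>R vector [cos (t + ?f t), sin (t + ?f t)]"
        by (metis minus_minus scaleR_minus1_left)
      then show ?thesis using that[of "-1"] by blast
    qed
    hence "vector [cos (t + ?g t), sin (t + ?g t)] = (c * r / r') *\<^sub>R (vector [cos (t + ?f t), sin (t + ?f t)] :: real^2)"
      using r'(1) by (auto simp: vec_eq_iff forall_2 field_simps)
    from vec_angle[OF this] obtain i :: int where "t + ?g t = t + ?f t + of_int i * pi" by blast
    thus ?thesis by (intro exI[of _ i]) simp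
  qed
  have cd: "continuous_on UNIV (\<lambda>s. ?g s - ?f s)"
    by (intro continuous_intros) auto
  obtain m :: int where m: "?g 0 - ?f 0 = of_int m * pi" using pt[of 0] by auto
  have "?g t - ?f t = of_int m * pi" for t using const_pi[OF cd pt, of t 0] m by simp
  thus ?thesis by (intro exI[of _ m]) (simp add: algebra_simps)
qed



lemma k_exists:
  assumes "group G" and h: "\<rho> \<in> hom G SL2t" and h': "\<rho>' \<in> hom G SL2t"
    and prs: "\<forall>y\<in>carrier G. pr (\<rho> y) = pr (\<rho>' y)"
  shows "\<exists>k::'g \<Rightarrow> int. (\<forall>y\<in>carrier G. \<forall>t. apply_bcontfun (\<rho>' y) t = apply_bcontfun (\<rho> y) t + of_int (k y) * pi)
     \<and> (\<forall>y\<in>carrier G. \<forall>w\<in>carrier G. k (y \<otimes>\<^bsub>G\<^esub> w) = k y + k w)"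
proof -
  define k where "k y = (SOME i::int. \<forall>t. apply_bcontfun (\<rho>' y) t = apply_bcontfun (\<rho> y) t + of_int i * pi)" for y
  have ks: "\<forall>t. apply_bcontfun (\<rho>' y) t = apply_bcontfun (\<rho> y) t + of_int (k y) * pi" if "y \<in> carrier G" for y
    unfolding k_def
    by (rule someI_ex, rule pr_shift) (use that prs hom_in_carrier[OF h] in auto)
  have ku: "k y = i" if "y \<in> carrier G" "\<forall>t. apply_bcontfun (\<rho>' y) t = apply_bcontfun (\<rho> y) t + of_int i * pi" for y i
    using ks[OF that(1)] that(2) by (metis add_left_cancel mult_cancel_right of_int_eq_iff pi_neq_zero)
  have km: "k (y \<otimes>\<^bsub>G\<^esub> w) = k y + k w" if y: "y \<in> carrier G" and w: "w \<in> carrier G" for y w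
  proof (rule ku)
    show "y \<otimes>\<^bsub>G\<^esub> w \<in> carrier G" using y w \<open>group G\<close> by (simp add: group.is_monoid monoid.m_closed)
    have m1: "\<rho> (y \<otimes>\<^bsub>G\<^esub> w) = SL2t_mult (\<rho> y) (\<rho> w)" using hom_mult[OF h y w] by (simp add: SL2t_def)
    have m2: "\<rho>' (y \<otimes>\<^bsub>G\<^esub> w) = SL2t_mult (\<rho>' y) (\<rho>' w)" using hom_mult[OF h' y w] by (simp add: SL2t_def)
    obtain A where A: "lifts_mat A (\<rho> y)" using hom_in_carrier[OF h y] by (auto simp: SL2t_def SL2t_carrier_def)
    note per = periodic_int[of "apply_bcontfun (\<rho> y)", OF lifts_periodic[OF A]]
    show "\<forall>t. apply_bcontfun (\<rho>' (y \<otimes>\<^bsub>G\<^esub> w)) t = apply_bcontfun (\<rho> (y \<otimes>\<^bsub>G\<^esub> w)) t + of_int (k y + k w) * pi"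
    proof
      fix t
      have "apply_bcontfun (\<rho>' (y \<otimes>\<^bsub>G\<^esub> w)) t
          = apply_bcontfun (\<rho> w) t + of_int (k w) * pi + (apply_bcontfun (\<rho> y) ((t + apply_bcontfun (\<rho> w) t) + of_int (k w) * pi) + of_int (k y) * pi)"
        using ks[OF y] ks[OF w] by (simp add: m2 mult_apply add.assoc)
      also have "\<dots> = apply_bcontfun (\<rho> w) t + apply_bcontfun (\<rho> y) (t + apply_bcontfun (\<rho> w) t) + of_int (k y + k w) * pi"
        using per[of "t + apply_bcontfun (\<rho> w) t" "k w"] by (simp add: algebra_simps)
      finally show "apply_bcontfun (\<rho>' (y \<otimes>\<^bsub>G\<^esub> w)) t = apply_bcontfun (\<rho> (y \<otimes>\<^bsub>G\<^esub> w)) t + of_int (k y + k w) * pi"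
        by (simp add: m1 mult_apply)
    qed
  qed
  show ?thesis using ks km by blast
qed

definition Kw :: "('a \<Rightarrow> int) \<Rightarrow> ('a \<times> bool) list \<Rightarrow> int" where
  "Kw f w = sum_list (map (\<lambda>(a, s). if s then f a else - f a) w)"

lemma Kw_simps [simp]: "Kw f [] = 0" "Kw f ((a, s) # w) = (if s then f a else - f a) + Kw f w"
  "Kw f (u @ v) = Kw f u + Kw f v"
  by (auto simp: Kw_def)

lemma eval_k:
  assumes G: "group G" and x: "x ` S \<subseteq> carrier G"
    and km: "\<forall>y\<in>carrier G. \<forall>w\<in>carrier G. k (y \<otimes>\<^bsub>G\<^esub> w) = k y + k w"
  shows "w \<in> lists (S \<times> UNIV) \<Longrightarrow> eval_word G x w \<in> carrier G \<and> k (eval_word G x w) = Kw (\<lambda>a. k (x a)) w"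
proof (induction w)
  case Nil
  have "k \<one>\<^bsub>G\<^esub> = k \<one>\<^bsub>G\<^esub> + k \<one>\<^bsub>G\<^esub>" using km G
    by (metis group.is_monoid monoid.l_one monoid.one_closed)
  then show ?case using G by (simp add: eval_word_def group.is_monoid monoid.one_closed)
next
  case (Cons p w)
  obtain a s where p: "p = (a, s)" by (cases p)
  have a: "x a \<in> carrier G" using Cons.prems p x by auto
  have IH: "eval_word G x w \<in> carrier G" "k (eval_word G x w) = Kw (\<lambda>a. k (x a)) w" using Cons by auto
  have ev: "eval_word G x (p # w) = (if s then x a else inv\<^bsub>G\<^esub> (x a)) \<otimes>\<^bsub>G\<^esub> eval_word G x w"
    by (simp add: eval_word_def p)
  have ic: "inv\<^bsub>G\<^esub> (x a) \<in> carrier G" using G a by (simp add: group.inv_closed)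
  have one: "k \<one>\<^bsub>G\<^esub> = 0"
  proof -
    have "k \<one>\<^bsub>G\<^esub> = k \<one>\<^bsub>G\<^esub> + k \<one>\<^bsub>G\<^esub>" using km G
      by (metis group.is_monoid monoid.l_one monoid.one_closed)
    thus ?thesis by simp
  qed
  have kinv: "k (inv\<^bsub>G\<^esub> (x a)) = - k (x a)"
  proof -
    have "k (x a \<otimes>\<^bsub>G\<^esub> inv\<^bsub>G\<^esub> (x a)) = k (x a) + k (inv\<^bsub>G\<^esub> (x a))" using km a ic by blast
    thus ?thesis using G a one by (simp add: group.r_inv)
  qed
  have c: "(if s then x a else inv\<^bsub>G\<^esub> (x a)) \<in> carrier G" using a ic by simp
  have "eval_word G x (p # w) \<in> carrier G" unfolding ev
    using c IH G by (simp add: group.is_monoid monoid.m_closed)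
  moreover have "k (eval_word G x (p # w)) = Kw (\<lambda>a. k (x a)) (p # w)"
  proof -
    have "k (eval_word G x (p # w)) = k (if s then x a else inv\<^bsub>G\<^esub> (x a)) + k (eval_word G x w)"
      unfolding ev using km c IH(1) by blast
    thus ?thesis using IH(2) kinv by (simp add: p)
  qed
  ultimately show ?case by blast
qed



lemma Kw_concat: "Kw f (concat (map F L)) = sum_list (map (\<lambda>i. Kw f (F i)) L)"
  by (induction L) auto

lemma Kw_comm: "Kw f (comm_word a c) = 0"
  by (simp add: comm_word_def)

lemma Kw_Q: "Kw f (map (\<lambda>j. (Q j, True)) [1..<n+1]) = (\<Sum>j=1..n. f (Q j))"
  by (induction n) auto

lemma Kw_hpow: "Kw f (hpow m) = m * f H"
  by (auto simp: hpow_def Kw_def sum_list_replicate)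

lemma Kw_rep: "Kw f (replicate m (a, s)) = int m * (if s then f a else - f a)"
  by (induction m) (auto simp: algebra_simps)

lemma arith:
  fixes kh :: int and kq :: "nat \<Rightarrow> int"
  assumes e: "euler_number b n \<alpha> \<beta> \<noteq> 0"
    and pos: "\<And>j. 1 \<le> j \<Longrightarrow> j \<le> n \<Longrightarrow> \<alpha> j > 0"
    and r1: "(\<Sum>j=1..n. kq j) + (- b) * kh = 0"
    and r2: "\<And>j. 1 \<le> j \<Longrightarrow> j \<le> n \<Longrightarrow> \<alpha> j * kq j + \<beta> j * kh = 0"
  shows "kh = 0 \<and> (\<forall>j. 1 \<le> j \<and> j \<le> n \<longrightarrow> kq j = 0)"
proof -
  have q: "real_of_int (kq j) = - (of_int (\<beta> j) / of_int (\<alpha> j)) * of_int kh" if "j \<in> {1..n}" for j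
  proof -
    have "real_of_int (\<alpha> j) * of_int (kq j) + of_int (\<beta> j) * of_int kh = 0"
      using r2[of j] that by (metis atLeastAtMost_iff of_int_0 of_int_add of_int_mult)
    moreover have "real_of_int (\<alpha> j) > 0" using pos[of j] that by simp
    ultimately show ?thesis by (simp add: field_simps)
  qed
  have "(\<Sum>j=1..n. real_of_int (kq j)) - of_int b * of_int kh = 0"
    using arg_cong[OF r1, of real_of_int] by simp
  moreover have "(\<Sum>j=1..n. real_of_int (kq j)) = (\<Sum>j=1..n. - (of_int (\<beta> j) / of_int (\<alpha> j)) * of_int kh)"
    using q by (rule sum.cong[OF HOL.refl])
  ultimately have "(\<Sum>j=1..n. - (of_int (\<beta> j) / of_int (\<alpha> j)) * real_of_int kh) - of_int b * of_int kh = 0"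
    by simp
  moreover have "(\<Sum>j=1..n. - (of_int (\<beta> j) / of_int (\<alpha> j)) * real_of_int kh)
     = - (\<Sum>j=1..n. (of_int (\<beta> j) / of_int (\<alpha> j))) * real_of_int kh"
    by (simp only: sum_distrib_right[symmetric] sum_negf)
  ultimately have "euler_number b n \<alpha> \<beta> * of_int kh = 0"
    unfolding euler_number_def by (simp add: algebra_simps)
  hence kh: "kh = 0" using e by simp
  moreover have "\<forall>j. 1 \<le> j \<and> j \<le> n \<longrightarrow> kq j = 0"
    using q kh by auto
  ultimately show ?thesis by blast
qed



theorem lemma4:
  fixes G :: "('g, 'm) monoid_scheme" and x :: "sgen \<Rightarrow> 'g"
    and g n :: nat and b :: int and \<alpha> \<beta> :: "nat \<Rightarrow> int"
    and \<rho> \<rho>' :: "'g \<Rightarrow> (real \<Rightarrow>\<^sub>C real)"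
  assumes norm: "normalised_seifert n \<alpha> \<beta>"
    and e: "euler_number b n \<alpha> \<beta> \<noteq> 0"
    and pres: "presented_by G (seif_gens g n) (seif_relators g b n \<alpha> \<beta>) x"
    and rho: "\<rho> \<in> Rep_dc G" and rho': "\<rho>' \<in> Rep_dc G"
    and prs: "\<forall>y\<in>carrier G. pr (\<rho> y) = pr (\<rho>' y)"
  shows "\<rho> (x H) = \<rho>' (x H) \<and> (\<forall>j. 1 \<le> j \<and> j \<le> n \<longrightarrow> \<rho> (x (Q j)) = \<rho>' (x (Q j)))"
proof -
  let ?S = "seif_gens g n" and ?R = "seif_relators g b n \<alpha> \<beta>"
  have G: "group G" and xS: "x ` ?S \<subseteq> carrier G"
    and eqv: "\<And>w w'. w \<in> lists (?S \<times> UNIV) \<Longrightarrow> w' \<in> lists (?S \<times> UNIV) \<Longrightarrow>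
        eval_word G x w = eval_word G x w' \<longleftrightarrow> word_eqv ?S ?R w w'"
    using pres unfolding presented_by_def by auto
  have h: "\<rho> \<in> hom G SL2t" and h': "\<rho>' \<in> hom G SL2t" using rho rho' by (auto simp: Rep_dc_def)
  obtain k :: "'g \<Rightarrow> int" where ks: "\<forall>y\<in>carrier G. \<forall>t. apply_bcontfun (\<rho>' y) t = apply_bcontfun (\<rho> y) t + of_int (k y) * pi"
    and km: "\<forall>y\<in>carrier G. \<forall>w\<in>carrier G. k (y \<otimes>\<^bsub>G\<^esub> w) = k y + k w"
    using k_exists[OF G h h' prs] by blast
  let ?K = "Kw (\<lambda>a. k (x a))"
  have rel0: "?K r = 0" if r: "r \<in> ?R" "r \<in> lists (?S \<times> UNIV)" for r
  proof -
    have "word_eqv ?S ?R ([] @ r @ []) ([] @ [])" by (rule word_eqv.rel[OF r(1)])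
    hence "eval_word G x r = eval_word G x []" using eqv[OF r(2)] by simp
    thus ?thesis using eval_k[OF G xS km r(2)] eval_k[OF G xS km, of "[]"] by simp
  qed
  have pos: "\<alpha> j > 0" "\<beta> j > 0" if "1 \<le> j" "j \<le> n" for j using norm that unfolding normalised_seifert_def by auto
  have r1: "(\<Sum>j=1..n. k (x (Q j))) + (- b) * k (x H) = 0"
  proof -
    let ?r = "concat (map (\<lambda>i. comm_word (U i) (V i)) [1..<g+1]) @ map (\<lambda>j. (Q j, True)) [1..<n+1] @ hpow (- b)"
    have "?r \<in> ?R" by (simp add: seif_relators_def)
    moreover have "?r \<in> lists (?S \<times> UNIV)"
      by (auto simp: seif_gens_def comm_word_def hpow_def)
    ultimately have "?K ?r = 0" by (rule rel0)
    thus ?thesis by (simp only: Kw_simps Kw_concat Kw_comm Kw_Q Kw_hpow) simp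
  qed
  have r2: "\<alpha> j * k (x (Q j)) + \<beta> j * k (x H) = 0" if j: "1 \<le> j" "j \<le> n" for j
  proof -
    let ?r = "replicate (nat (\<alpha> j)) (Q j, True) @ hpow (\<beta> j)"
    have "?r \<in> ?R" using j by (auto simp: seif_relators_def)
    moreover have "?r \<in> lists (?S \<times> UNIV)"
      using j by (auto simp: seif_gens_def hpow_def)
    ultimately have "?K ?r = 0" by (rule rel0)
    thus ?thesis using pos[OF j] by (simp add: Kw_rep Kw_hpow)
  qed
  from arith[OF e _ r1 r2] pos
  have z: "k (x H) = 0" "\<And>j. 1 \<le> j \<Longrightarrow> j \<le> n \<Longrightarrow> k (x (Q j)) = 0" by auto
  have eq: "\<rho> (x a) = \<rho>' (x a)" if "a \<in> ?S" "k (x a) = 0" for a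
  proof (rule bcontfun_eqI)
    fix t
    have "x a \<in> carrier G" using xS that by auto
    thus "apply_bcontfun (\<rho> (x a)) t = apply_bcontfun (\<rho>' (x a)) t" using ks that by simp
  qed
  show ?thesis
  proof (intro conjI allI impI)
    show "\<rho> (x H) = \<rho>' (x H)" by (rule eq) (auto simp: seif_gens_def z)
    fix j assume "1 \<le> j \<and> j \<le> n"
    then show "\<rho> (x (Q j)) = \<rho>' (x (Q j))" by (intro eq) (auto simp: seif_gens_def z)
  qed
qed


end
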